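(* If a Turing degree $\mathbf d$ is loquaciously high for paths, then every $\Pi^1_1$ subset of $\omega$ is c.e. relative to $\mathbf d$, uniformly (given a $\Pi^1_1$ index for the set, one effectively obtains an index of a $\mathbf d$-c.e. enumeration of it).
   Context: Fix a standard effective listing $(T_e:e\in\omega)$ of all computable subtrees of $\omega^{<\omega}$. A degree $\mathbf d$ is loquaciously high for paths if there are $D\in\mathbf d$ and a Turing functional $\Phi$ such that $\Phi^D(e,n)$ converges for all $e,n$, and whenever $T_e$ is ill-founded (has an infinite path), the function $n\mapsto\Phi^D(e,n)$ is an infinite path through $T_e$. *)

theory Defs
  imports Main "HOL-Library.Nat_Bijection"
begin

text \<open>With t = fst (prod_decode e),
  c = snd (prod_decode e):
  t=0 zero; t=1 successor of first argument; t=2 projection onto argument c;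
  t=3 composition (c codes (f, list of g's)); t=4 primitive recursion on the
  first argument (c codes (f,g)); t=5 minimisation of program c;
  t=6 auxiliary search (c codes (f,m)); t=7 oracle query on first argument;
  other codes diverge.  run A k e xs is the result of running program e with
  oracle A on inputs xs using fuel k (None = no convergence within fuel k).\<close>

fun hd0 :: "nat list \<Rightarrow> nat" where
  "hd0 [] = 0"
| "hd0 (x # _) = x"

function run :: "(nat \<Rightarrow> nat) \<Rightarrow> nat \<Rightarrow> nat \<Rightarrow> nat list \<Rightarrow> nat option" where
  "run A 0 e xs = None"
| "run A (Suc k) e xs =
    (let t = fst (prod_decode e); c = snd (prod_decode e) in
     if t = 0 then Some 0
     else if t = 1 then Some (Suc (hd0 xs))
     else if t = 2 then (if c < length xs then Some (xs ! c) else None)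
     else if t = 3 then
       (case those (map (\<lambda>g. run A k g xs) (list_decode (snd (prod_decode c)))) of
          None \<Rightarrow> None
        | Some ys \<Rightarrow> run A k (fst (prod_decode c)) ys)
     else if t = 4 then
       (case xs of
          [] \<Rightarrow> None
        | n # ys \<Rightarrow>
            (if n = 0 then run A k (fst (prod_decode c)) ys
             else (case run A k e ((n - 1) # ys) of
                     None \<Rightarrow> None
                   | Some y \<Rightarrow> run A k (snd (prod_decode c)) (y # (n - 1) # ys))))
     else if t = 5 then run A k (prod_encode (6, prod_encode (c, 0))) xs
     else if t = 6 then
       (case run A k (fst (prod_decode c)) (snd (prod_decode c) # xs) of
          None \<Rightarrow> None
        | Some y \<Rightarrow> (if y = 0 then Some (snd (prod_decode c))
                     else run A k (prod_encode (6, prod_encode (fst (prod_decode c),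
                                     Suc (snd (prod_decode c))))) xs))
     else if t = 7 then Some (A (hd0 xs))
     else None)"
  by pat_completeness auto
termination by (relation "measure (\<lambda>(A, k, e, xs). k)") auto

definition conv :: "(nat \<Rightarrow> nat) \<Rightarrow> nat \<Rightarrow> nat list \<Rightarrow> nat \<Rightarrow> bool" where
  "conv A e xs y \<longleftrightarrow> (\<exists>k. run A k e xs = Some y)"

definition chi :: "nat set \<Rightarrow> nat \<Rightarrow> nat" where
  "chi D n = (if n \<in> D then 1 else 0)"

definition noOracle :: "nat \<Rightarrow> nat" where
  "noOracle n = 0"

definition W :: "nat set \<Rightarrow> nat \<Rightarrow> nat set" where
  "W D e = {x. \<exists>y. conv (chi D) e [x] y}"

definition isPath :: "nat list set \<Rightarrow> (nat \<Rightarrow> nat) \<Rightarrow> bool" where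
  "isPath T f \<longleftrightarrow> (\<forall>n. map f [0..<n] \<in> T)"

definition illFounded :: "nat list set \<Rightarrow> bool" where
  "illFounded T \<longleftrightarrow> (\<exists>f. isPath T f)"

text \<open>Each T_e is a (uniformly) computable tree, and for
  every computable tree T with characteristic function phi_e, T_e has the
  same infinite paths as T.\<close>
definition Tr :: "nat \<Rightarrow> nat list set" where
  "Tr e = {\<sigma>. \<forall>j\<le>length \<sigma>.
             run noOracle (length \<sigma>) e [list_encode (take j \<sigma>)] \<noteq> Some 0}"

definition TrP :: "nat \<Rightarrow> nat \<Rightarrow> nat list set" where
  "TrP e i = {\<sigma>. \<forall>j\<le>length \<sigma>.
             run noOracle (length \<sigma>) e [i, list_encode (take j \<sigma>)] \<noteq> Some 0}"

text \<open>The Pi^1_1 set with index e (Kleene normal form):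
  i belongs to it iff the tree TrP e i is well-founded.\<close>
definition Pi11 :: "nat \<Rightarrow> nat set" where
  "Pi11 e = {i. \<not> illFounded (TrP e i)}"

definition loqHighPaths :: "nat set \<Rightarrow> bool" where
  "loqHighPaths D \<longleftrightarrow>
     (\<exists>\<Phi> (p :: nat \<Rightarrow> nat \<Rightarrow> nat).
        (\<forall>e n. conv (chi D) \<Phi> [e, n] (p e n)) \<and>
        (\<forall>e. illFounded (Tr e) \<longrightarrow> isPath (Tr e) (p e)))"

end

theory Submission
  imports Defs
begin


lemma those_mono:
  "those (map f l) = Some ys \<Longrightarrow> (\<And>x y. f x = Some y \<Longrightarrow> g x = Some y) \<Longrightarrow> those (map g l) = Some ys"
proof (induction l arbitrary: ys)
  case Nil then show ?case by simp
next
  case (Cons a l)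
  then show ?case by (auto split: option.splits)
qed

lemma run_mono:
  "run A k e xs = Some y \<Longrightarrow> k \<le> k' \<Longrightarrow> run A k' e xs = Some y"
proof (induction k arbitrary: k' e xs y)
  case 0 then show ?case by simp
next
  case (Suc k)
  then obtain k'' where k': "k' = Suc k''" and kk: "k \<le> k''" by (cases k') auto
  have IH: "\<And>e xs y. run A k e xs = Some y \<Longrightarrow> run A k'' e xs = Some y"
    using Suc.IH kk by blast
  show ?case using Suc.prems(1) unfolding k'
    by (auto simp: Let_def IH split: if_splits option.splits list.splits
             dest: those_mono[where g="\<lambda>g. run A k'' g xs", OF _ IH])
qed




abbreviation pe :: "nat \<Rightarrow> nat \<Rightarrow> nat" where "pe a b \<equiv> prod_encode (a, b)"

definition "zp = pe 0 0"
definition "sp = pe 1 0"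
definition "pj i = pe 2 i"
definition "cmp f gs = pe 3 (pe f (list_encode gs))"
definition "prc f g = pe 4 (pe f g)"
definition "mup c = pe 5 c"
definition "srch f m = pe 6 (pe f m)"

lemma run_Suc_pe: "run A (Suc k) (pe t c) xs =
    (if t = 0 then Some 0
     else if t = 1 then Some (Suc (hd0 xs))
     else if t = 2 then (if c < length xs then Some (xs ! c) else None)
     else if t = 3 then
       (case those (map (\<lambda>g. run A k g xs) (list_decode (snd (prod_decode c)))) of
          None \<Rightarrow> None
        | Some ys \<Rightarrow> run A k (fst (prod_decode c)) ys)
     else if t = 4 then
       (case xs of
          [] \<Rightarrow> None
        | n # ys \<Rightarrow>
            (if n = 0 then run A k (fst (prod_decode c)) ys
             else (case run A k (pe t c) ((n - 1) # ys) of
                     None \<Rightarrow> None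
                   | Some y \<Rightarrow> run A k (snd (prod_decode c)) (y # (n - 1) # ys))))
     else if t = 5 then run A k (prod_encode (6, prod_encode (c, 0))) xs
     else if t = 6 then
       (case run A k (fst (prod_decode c)) (snd (prod_decode c) # xs) of
          None \<Rightarrow> None
        | Some y \<Rightarrow> (if y = 0 then Some (snd (prod_decode c))
                     else run A k (prod_encode (6, prod_encode (fst (prod_decode c),
                                     Suc (snd (prod_decode c))))) xs))
     else if t = 7 then Some (A (hd0 xs))
     else None)"
  by (simp only: run.simps(2) Let_def prod_encode_inverse fst_conv snd_conv)

declare run.simps(2)[simp del]

lemma run_zp[simp]: "run A (Suc k) zp xs = Some 0"
  unfolding zp_def srch_def run_Suc_pe prod_encode_inverse fst_conv snd_conv by simp
lemma run_sp[simp]: "run A (Suc k) sp xs = Some (Suc (hd0 xs))"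
  unfolding sp_def srch_def run_Suc_pe prod_encode_inverse fst_conv snd_conv by simp
lemma run_pj[simp]: "run A (Suc k) (pj i) xs = (if i < length xs then Some (xs!i) else None)"
  unfolding pj_def srch_def run_Suc_pe prod_encode_inverse fst_conv snd_conv by simp
lemma run_cmp[simp]: "run A (Suc k) (cmp f gs) xs =
   (case those (map (\<lambda>g. run A k g xs) gs) of None \<Rightarrow> None | Some ys \<Rightarrow> run A k f ys)"
  unfolding cmp_def srch_def run_Suc_pe prod_encode_inverse fst_conv snd_conv by simp
lemma run_prc[simp]: "run A (Suc k) (prc f g) xs =
   (case xs of [] \<Rightarrow> None
    | n # ys \<Rightarrow> (if n = 0 then run A k f ys
              else (case run A k (prc f g) ((n - 1) # ys) of None \<Rightarrow> None
                    | Some y \<Rightarrow> run A k g (y # (n - 1) # ys))))"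
  unfolding prc_def srch_def run_Suc_pe prod_encode_inverse fst_conv snd_conv by simp
lemma run_mup[simp]: "run A (Suc k) (mup c) xs = run A k (srch c 0) xs"
  unfolding mup_def srch_def run_Suc_pe prod_encode_inverse fst_conv snd_conv by simp
lemma run_srch[simp]: "run A (Suc k) (srch f m) xs =
   (case run A k f (m # xs) of None \<Rightarrow> None
    | Some y \<Rightarrow> (if y = 0 then Some m else run A k (srch f (Suc m)) xs))"
  unfolding srch_def srch_def run_Suc_pe prod_encode_inverse fst_conv snd_conv by simp

lemma conv_det: "conv A e xs y \<Longrightarrow> conv A e xs y' \<Longrightarrow> y = y'"
  unfolding conv_def
  by (metis nat_le_linear option.inject run_mono)

lemma conv_mono: "run A k e xs = Some y \<Longrightarrow> conv A e xs y"
  unfolding conv_def by blast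

definition computes :: "(nat \<Rightarrow> nat) \<Rightarrow> nat \<Rightarrow> nat \<Rightarrow> (nat list \<Rightarrow> nat) \<Rightarrow> bool" where
  "computes A p n F \<longleftrightarrow> (\<forall>xs. length xs = n \<longrightarrow> conv A p xs (F xs))"

lemma those_common:
  assumes "list_all2 (\<lambda>g y. conv A g xs y) gs ys"
  shows "\<exists>k. \<forall>k'\<ge>k. those (map (\<lambda>g. run A k' g xs) gs) = Some ys"
  using assms
proof (induction rule: list_all2_induct)
  case Nil then show ?case by simp
next
  case (Cons g gs y ys)
  from Cons(1) obtain k1 where k1: "run A k1 g xs = Some y" unfolding conv_def by blast
  from Cons(3) obtain k2 where k2: "\<forall>k'\<ge>k2. those (map (\<lambda>g. run A k' g xs) gs) = Some ys" by blast
  show ?case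
    by (rule exI[of _ "max k1 k2"]) (auto simp: k2 run_mono[OF k1])
qed

lemma those_det:
  assumes "list_all2 (\<lambda>g y. conv A g xs y) gs ys"
    and "those (map (\<lambda>g. run A k g xs) gs) = Some zs"
  shows "zs = ys"
  using assms
proof (induction arbitrary: zs rule: list_all2_induct)
  case Nil then show ?case by simp
next
  case (Cons g gs y ys)
  then show ?case
    by (auto split: option.splits dest: conv_mono conv_det)
qed

lemma computes_cmp:
  assumes f: "computes A f m F" and gs: "list_all2 (\<lambda>g G. computes A g n G) gs Gs"
    and len: "length gs = m"
  shows "computes A (cmp f gs) n (\<lambda>xs. F (map (\<lambda>G. G xs) Gs))"
  unfolding computes_def
proof (intro allI impI)
  fix xs :: "nat list" assume lx: "length xs = n"
  have la: "list_all2 (\<lambda>g y. conv A g xs y) gs (map (\<lambda>G. G xs) Gs)"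
    using gs lx by (auto simp: list_all2_conv_all_nth computes_def)
  obtain k1 where k1: "\<forall>k'\<ge>k1. those (map (\<lambda>g. run A k' g xs) gs) = Some (map (\<lambda>G. G xs) Gs)"
    using those_common[OF la] by blast
  have "length (map (\<lambda>G. G xs) Gs) = m" using gs len by (simp add: list_all2_lengthD)
  then obtain k2 where k2: "run A k2 f (map (\<lambda>G. G xs) Gs) = Some (F (map (\<lambda>G. G xs) Gs))"
    using f unfolding computes_def conv_def by blast
  have "run A (Suc (max k1 k2)) (cmp f gs) xs = Some (F (map (\<lambda>G. G xs) Gs))"
    using k1 run_mono[OF k2] by simp
  then show "conv A (cmp f gs) xs (F (map (\<lambda>G. G xs) Gs))" by (rule conv_mono)
qed

lemma conv_cmp_inv:
  assumes "conv A (cmp f gs) xs y" and "list_all2 (\<lambda>g y. conv A g xs y) gs ys"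
  shows "conv A f ys y"
proof -
  obtain k where k: "run A k (cmp f gs) xs = Some y" using assms(1) unfolding conv_def by blast
  then obtain k' where k': "k = Suc k'" by (cases k) auto
  from k[unfolded k'] obtain zs where z: "those (map (\<lambda>g. run A k' g xs) gs) = Some zs"
      and r: "run A k' f zs = Some y"
    by (auto split: option.splits)
  have "zs = ys" using those_det[OF assms(2) z] .
  then show ?thesis using r conv_mono by blast
qed

fun nrec :: "nat \<Rightarrow> (nat \<Rightarrow> nat \<Rightarrow> nat) \<Rightarrow> nat \<Rightarrow> nat" where
  "nrec b s 0 = b"
| "nrec b s (Suc j) = s j (nrec b s j)"

lemma computes_prc:
  assumes f: "computes A f n F" and g: "computes A g (n+2) G"
  shows "computes A (prc f g) (Suc n)
     (\<lambda>xs. nrec (F (tl xs)) (\<lambda>j r. G (r # j # tl xs)) (hd xs))"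
  unfolding computes_def
proof (intro allI impI)
  fix xs :: "nat list" assume lx: "length xs = Suc n"
  then obtain v ys where xs: "xs = v # ys" and ly: "length ys = n" by (cases xs) auto
  have "conv A (prc f g) (j # ys) (nrec (F ys) (\<lambda>j r. G (r # j # ys)) j)" for j
  proof (induction j)
    case 0
    obtain k where "run A k f ys = Some (F ys)" using f ly unfolding computes_def conv_def by blast
    then have "run A (Suc k) (prc f g) (0 # ys) = Some (F ys)" by simp
    then show ?case unfolding conv_def nrec.simps by blast
  next
    case (Suc j)
    let ?r = "nrec (F ys) (\<lambda>j r. G (r # j # ys)) j"
    obtain k1 where k1: "run A k1 (prc f g) (j # ys) = Some ?r" using Suc unfolding conv_def by blast
    obtain k2 where k2: "run A k2 g (?r # j # ys) = Some (G (?r # j # ys))"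
      using g ly unfolding computes_def conv_def by fastforce
    have "run A (Suc (max k1 k2)) (prc f g) (Suc j # ys) = Some (G (?r # j # ys))"
      using run_mono[OF k1, of "max k1 k2"] run_mono[OF k2, of "max k1 k2"] by simp
    then show ?case unfolding conv_def nrec.simps by blast
  qed
  then show "conv A (prc f g) xs (nrec (F (tl xs)) (\<lambda>j r. G (r # j # tl xs)) (hd xs))"
    by (simp add: xs)
qed

lemma srch_conv:
  assumes c: "computes A c (Suc n) F" and lx: "length xs = n"
    and z: "F (m0 # xs) = 0" and nz: "\<forall>m'. m \<le> m' \<and> m' < m0 \<longrightarrow> F (m' # xs) \<noteq> 0"
    and le: "m \<le> m0"
  shows "conv A (srch c m) xs m0"
  using le nz
proof (induction "m0 - m" arbitrary: m)
  case 0
  then have m: "m = m0" by simp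
  obtain k where "run A k c (m0 # xs) = Some 0" using c lx z unfolding computes_def conv_def
    by (metis length_Cons)
  then have "run A (Suc k) (srch c m) xs = Some m0" by (simp add: m)
  then show ?case by (rule conv_mono)
next
  case (Suc d)
  then have lt: "m < m0" by simp
  then have "F (m # xs) \<noteq> 0" using Suc.prems by auto
  obtain k1 where k1: "run A k1 c (m # xs) = Some (F (m # xs))" using c lx unfolding computes_def conv_def
    by (metis length_Cons)
  have "conv A (srch c (Suc m)) xs m0" using Suc.hyps(1)[of "Suc m"] Suc.hyps(2) Suc.prems lt by auto
  then obtain k2 where k2: "run A k2 (srch c (Suc m)) xs = Some m0" unfolding conv_def by blast
  have "run A (Suc (max k1 k2)) (srch c m) xs = Some m0"
    using run_mono[OF k1, of "max k1 k2"] run_mono[OF k2, of "max k1 k2"] \<open>F (m # xs) \<noteq> 0\<close> by simp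
  then show ?case by (rule conv_mono)
qed

lemma mup_conv:
  assumes c: "computes A c (Suc n) F" and lx: "length xs = n" and z: "F (m0 # xs) = 0"
  shows "\<exists>y. conv A (mup c) xs y"
proof -
  let ?m = "LEAST m. F (m # xs) = 0"
  have "F (?m # xs) = 0" by (rule LeastI[of _ m0]) (rule z)
  moreover have "\<forall>m'. 0 \<le> m' \<and> m' < ?m \<longrightarrow> F (m' # xs) \<noteq> 0" using not_less_Least by blast
  ultimately have "conv A (srch c 0) xs ?m" using srch_conv[OF c lx] by blast
  then obtain k where "run A k (srch c 0) xs = Some ?m" unfolding conv_def by blast
  then have "run A (Suc k) (mup c) xs = Some ?m" by simp
  then show ?thesis by (blast intro: conv_mono)
qed

lemma srch_inv:
  assumes c: "computes A c (Suc n) F" and lx: "length xs = n"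
  shows "run A k (srch c m) xs = Some y \<Longrightarrow> F (y # xs) = 0"
proof (induction k arbitrary: m)
  case 0 then show ?case by simp
next
  case (Suc k)
  have cv: "conv A c (m # xs) (F (m # xs))" using c lx unfolding computes_def by simp
  show ?case
  proof (cases "run A k c (m # xs)")
    case None then show ?thesis using Suc.prems by simp
  next
    case (Some v)
    then have v: "v = F (m # xs)" using cv conv_det conv_mono by blast
    show ?thesis
    proof (cases "v = 0")
      case True then show ?thesis using Suc.prems Some v by simp
    next
      case False then show ?thesis using Suc.prems Some Suc.IH by simp
    qed
  qed
qed

lemma mup_inv:
  assumes c: "computes A c (Suc n) F" and lx: "length xs = n" and cv: "conv A (mup c) xs y"
  shows "F (y # xs) = 0"
proof -
  obtain k where k: "run A k (mup c) xs = Some y" using cv unfolding conv_def by blast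
  then obtain k' where "k = Suc k'" by (cases k) auto
  then show ?thesis using k srch_inv[OF c lx] by simp
qed




datatype ex = V nat | K nat | Sc ex | Rc ex ex ex | Ph ex ex

fun cst :: "nat \<Rightarrow> nat" where
  "cst 0 = zp"
| "cst (Suc n) = cmp sp [cst n]"

lemma computes_cong:
  "computes A p n F \<Longrightarrow> (\<And>xs. length xs = n \<Longrightarrow> F xs = G xs) \<Longrightarrow> computes A p n G"
  unfolding computes_def by auto

lemma computes_zp: "computes A zp n (\<lambda>_. 0)"
  unfolding computes_def conv_def by (metis run_zp)

lemma computes_sp: "computes A sp n (\<lambda>xs. Suc (hd0 xs))"
  unfolding computes_def conv_def by (metis run_sp)

lemma computes_pj: "i < n \<Longrightarrow> computes A (pj i) n (\<lambda>xs. xs ! i)"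
  unfolding computes_def conv_def by (metis run_pj)

lemma computes_cst: "computes A (cst c) n (\<lambda>_. c)"
proof (induction c)
  case 0 then show ?case by (simp add: computes_zp)
next
  case (Suc c)
  have "computes A (cmp sp [cst c]) n (\<lambda>xs. (\<lambda>ys. Suc (hd0 ys)) (map (\<lambda>G. G xs) [\<lambda>_. c]))"
    by (rule computes_cmp[OF computes_sp]) (use Suc in auto)
  then show ?case by simp
qed

fun compile :: "nat \<Rightarrow> nat \<Rightarrow> ex \<Rightarrow> nat" where
  "compile P n (V i) = pj i"
| "compile P n (K c) = cst c"
| "compile P n (Sc e) = cmp sp [compile P n e]"
| "compile P n (Rc m b s) = cmp (prc (compile P n b) (compile P (n+2) s)) (compile P n m # map pj [0..<n])"
| "compile P n (Ph a b) = cmp P [compile P n a, compile P n b]"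

fun evl :: "(nat \<Rightarrow> nat \<Rightarrow> nat) \<Rightarrow> nat list \<Rightarrow> ex \<Rightarrow> nat" where
  "evl \<phi> xs (V i) = (if i < length xs then xs ! i else 0)"
| "evl \<phi> xs (K c) = c"
| "evl \<phi> xs (Sc e) = Suc (evl \<phi> xs e)"
| "evl \<phi> xs (Rc m b s) = nrec (evl \<phi> xs b) (\<lambda>j r. evl \<phi> (r # j # xs) s) (evl \<phi> xs m)"
| "evl \<phi> xs (Ph a b) = \<phi> (evl \<phi> xs a) (evl \<phi> xs b)"

fun wfe :: "nat \<Rightarrow> ex \<Rightarrow> bool" where
  "wfe n (V i) = (i < n)"
| "wfe n (K c) = True"
| "wfe n (Sc e) = wfe n e"
| "wfe n (Rc m b s) = (wfe n m \<and> wfe n b \<and> wfe (n+2) s)"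
| "wfe n (Ph a b) = (wfe n a \<and> wfe n b)"

lemma map_nth_upt: "length xs = n \<Longrightarrow> map (\<lambda>i. xs ! i) [0..<n] = xs"
  using map_nth[of xs] by simp

theorem compile_correct:
  assumes P: "\<And>a b. conv A P [a, b] (\<phi> a b)"
  shows "wfe n e \<Longrightarrow> computes A (compile P n e) n (\<lambda>xs. evl \<phi> xs e)"
proof (induction e arbitrary: n)
  case (V i)
  then show ?case using computes_pj[of i n A] by (auto intro: computes_cong)
next
  case (K c) then show ?case by (simp add: computes_cst)
next
  case (Sc e)
  have "computes A (cmp sp [compile P n e]) n (\<lambda>xs. (\<lambda>ys. Suc (hd0 ys)) (map (\<lambda>G. G xs) [\<lambda>xs. evl \<phi> xs e]))"
    by (rule computes_cmp[OF computes_sp]) (use Sc in auto)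
  then show ?case by simp
next
  case (Rc m b s)
  have pr: "computes A (prc (compile P n b) (compile P (n+2) s)) (Suc n)
     (\<lambda>xs. nrec ((\<lambda>xs. evl \<phi> xs b) (tl xs)) (\<lambda>j r. (\<lambda>xs. evl \<phi> xs s) (r # j # tl xs)) (hd xs))"
    by (rule computes_prc) (use Rc in auto)
  have la: "list_all2 (\<lambda>g G. computes A g n G) (compile P n m # map pj [0..<n])
      ((\<lambda>xs. evl \<phi> xs m) # map (\<lambda>i xs. xs ! i) [0..<n])"
    using Rc by (auto simp: list_all2_map1 list_all2_map2 intro!: list_all2_all_nthI computes_pj)
  have "computes A (compile P n (Rc m b s)) n
     (\<lambda>xs. (\<lambda>xs. nrec (evl \<phi> (tl xs) b) (\<lambda>j r. evl \<phi> (r # j # tl xs) s) (hd xs))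
        (map (\<lambda>G. G xs) ((\<lambda>xs. evl \<phi> xs m) # map (\<lambda>i xs. xs ! i) [0..<n])))"
    unfolding compile.simps by (rule computes_cmp[OF pr la]) simp
  then show ?case
    by (rule computes_cong) (simp add: comp_def map_nth_upt)
next
  case (Ph a b)
  have P2: "computes A P 2 (\<lambda>ys. \<phi> (ys ! 0) (ys ! 1))"
    unfolding computes_def
  proof (intro allI impI)
    fix ys :: "nat list" assume "length ys = 2"
    then obtain u v where "ys = [u, v]"
      by (metis (no_types) One_nat_def Suc_length_conv length_0_conv numeral_2_eq_2)
    then show "conv A P ys (\<phi> (ys ! 0) (ys ! 1))" using P by simp
  qed
  have "computes A (cmp P [compile P n a, compile P n b]) n
     (\<lambda>xs. (\<lambda>ys. \<phi> (ys ! 0) (ys ! 1)) (map (\<lambda>G. G xs) [\<lambda>xs. evl \<phi> xs a, \<lambda>xs. evl \<phi> xs b]))"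
    by (rule computes_cmp[OF P2]) (use Ph in auto)
  then show ?case by simp
qed

section \<open>Shifting\<close>

fun sh :: "nat \<Rightarrow> ex \<Rightarrow> ex" where
  "sh c (V i) = V (if i < c then i else Suc i)"
| "sh c (K n) = K n"
| "sh c (Sc e) = Sc (sh c e)"
| "sh c (Rc m b s) = Rc (sh c m) (sh c b) (sh (c+2) s)"
| "sh c (Ph a b) = Ph (sh c a) (sh c b)"

lemma eval_sh: "c \<le> length xs \<Longrightarrow> evl \<phi> (take c xs @ z # drop c xs) (sh c e) = evl \<phi> xs e"
proof (induction e arbitrary: c xs)
  case (V i)
  then show ?case by (auto simp: nth_append min_def)
next
  case (Rc m b s)
  have "evl \<phi> (r # j # take c xs @ z # drop c xs) (sh (c+2) s) = evl \<phi> (r # j # xs) s" for r j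
    using Rc.IH(3)[of "c+2" "r # j # xs"] Rc.prems by simp
  then show ?case using Rc by simp
qed auto

lemma eval_sh0[simp]: "evl \<phi> (z # xs) (sh 0 e) = evl \<phi> xs e"
  using eval_sh[of 0 xs \<phi> z e] by simp

lemma wf_sh: "wfe n e \<Longrightarrow> c \<le> n \<Longrightarrow> wfe (Suc n) (sh c e)"
  by (induction e arbitrary: n c) auto

lemma wf_sh_iff[simp]: "c \<le> n \<Longrightarrow> wfe (Suc n) (sh c e) = wfe n e"
  by (induction e arbitrary: n c) auto

lemma wf_sh0: "wfe n e \<Longrightarrow> wfe (Suc n) (sh 0 e)"
  by (rule wf_sh) auto

definition "lift2 e = sh 0 (sh 0 e)"
lemma eval_lift2[simp]: "evl \<phi> (r # j # xs) (lift2 e) = evl \<phi> xs e"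
  by (simp add: lift2_def)
lemma wf_lift2[simp]: "wfe (Suc (Suc n)) (lift2 e) = wfe n e"
  by (simp add: lift2_def)

section \<open>Derived operations\<close>

definition "Ad a b = Rc a b (Sc (V 0))"
definition "Pd a = Rc a (K 0) (V 1)"
definition "Mn a b = Rc b a (Pd (V 0))"
definition "Cd c a b = Rc c b (lift2 a)"
definition "Nt a = Cd a (K 0) (K 1)"
definition "An a b = Cd a (Cd b (K 1) (K 0)) (K 0)"
definition "Or a b = Cd a (K 1) (Cd b (K 1) (K 0))"
definition "Eq a b = Nt (Ad (Mn a b) (Mn b a))"
definition "Le a b = Nt (Mn a b)"
definition "Tri a = Rc a (K 0) (Ad (V 0) (Sc (V 1)))"
definition "Pe a b = Ad (Tri (Ad a b)) a"
definition "Dd x = Rc x (K 0) (Cd (Le (Tri (Sc (V 0))) (Sc (V 1))) (Sc (V 0)) (V 0))"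
definition "Fs x = Mn x (Tri (Dd x))"
definition "Sn x = Mn (Dd x) (Fs x)"
definition "Bx m body = Rc m (K 0) (Or (V 0) (sh 0 body))"
definition "Ba m body = Nt (Bx m (Nt body))"

lemma if01_ne0[simp]: "((if P then 1 else (0::nat)) \<noteq> 0) = P" "((if P then 1 else (0::nat)) = 0) = (\<not> P)"
  by simp_all

lemma eval_Ad[simp]: "evl \<phi> xs (Ad a b) = evl \<phi> xs a + evl \<phi> xs b"
proof -
  have "nrec (evl \<phi> xs b) (\<lambda>j r. evl \<phi> (r # j # xs) (Sc (V 0))) n = n + evl \<phi> xs b" for n
    by (induction n) auto
  then show ?thesis by (simp add: Ad_def)
qed
lemma eval_Pd[simp]: "evl \<phi> xs (Pd a) = evl \<phi> xs a - 1"
proof -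
  have "nrec 0 (\<lambda>j r. evl \<phi> (r # j # xs) (V 1)) n = n - 1" for n
    by (induction n) auto
  then show ?thesis by (simp add: Pd_def)
qed
lemma eval_Mn[simp]: "evl \<phi> xs (Mn a b) = evl \<phi> xs a - evl \<phi> xs b"
proof -
  have "nrec (evl \<phi> xs a) (\<lambda>j r. evl \<phi> (r # j # xs) (Pd (V 0))) n = evl \<phi> xs a - n" for n
    by (induction n) auto
  then show ?thesis by (simp add: Mn_def)
qed
lemma eval_Cd[simp]: "evl \<phi> xs (Cd c a b) = (if evl \<phi> xs c = 0 then evl \<phi> xs b else evl \<phi> xs a)"
proof -
  have "nrec (evl \<phi> xs b) (\<lambda>j r. evl \<phi> (r # j # xs) (lift2 a)) n = (if n = 0 then evl \<phi> xs b else evl \<phi> xs a)" for n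
    by (cases n) auto
  then show ?thesis by (simp add: Cd_def)
qed
lemma eval_Nt[simp]: "evl \<phi> xs (Nt a) = (if evl \<phi> xs a = 0 then 1 else 0)"
  by (simp add: Nt_def)
lemma eval_An[simp]: "evl \<phi> xs (An a b) = (if evl \<phi> xs a \<noteq> 0 \<and> evl \<phi> xs b \<noteq> 0 then 1 else 0)"
  by (simp add: An_def)
lemma eval_Or[simp]: "evl \<phi> xs (Or a b) = (if evl \<phi> xs a \<noteq> 0 \<or> evl \<phi> xs b \<noteq> 0 then 1 else 0)"
  by (simp add: Or_def)
lemma eval_Eq[simp]: "evl \<phi> xs (Eq a b) = (if evl \<phi> xs a = evl \<phi> xs b then 1 else 0)"
  by (simp add: Eq_def)
lemma eval_Le[simp]: "evl \<phi> xs (Le a b) = (if evl \<phi> xs a \<le> evl \<phi> xs b then 1 else 0)"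
  by (simp add: Le_def)
lemma eval_Tri[simp]: "evl \<phi> xs (Tri a) = triangle (evl \<phi> xs a)"
proof -
  have "nrec 0 (\<lambda>j r. evl \<phi> (r # j # xs) (Ad (V 0) (Sc (V 1)))) n = triangle n" for n
    by (induction n) auto
  then show ?thesis by (simp add: Tri_def)
qed
lemma eval_Pe[simp]: "evl \<phi> xs (Pe a b) = prod_encode (evl \<phi> xs a, evl \<phi> xs b)"
  by (simp add: Pe_def prod_encode_def)

fun dd :: "nat \<Rightarrow> nat" where
  "dd 0 = 0"
| "dd (Suc n) = (if triangle (Suc (dd n)) \<le> Suc n then Suc (dd n) else dd n)"

lemma dd_inv: "triangle (dd n) \<le> n \<and> n < triangle (Suc (dd n))"
  by (induction n) auto

lemma prod_decode_dd: "prod_decode n = (n - triangle (dd n), dd n - (n - triangle (dd n)))"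
proof -
  let ?d = "dd n" and ?a = "n - triangle (dd n)"
  have n: "n = triangle ?d + ?a" and a: "?a \<le> ?d" using dd_inv[of n] by auto
  have "prod_decode n = prod_decode_aux ?d ?a" using n prod_decode_triangle_add by metis
  also have "\<dots> = (?a, ?d - ?a)" using a by (simp add: prod_decode_aux.simps)
  finally show ?thesis .
qed

lemma eval_Dd[simp]: "evl \<phi> xs (Dd x) = dd (evl \<phi> xs x)"
proof -
  have "nrec 0 (\<lambda>j r. evl \<phi> (r # j # xs) (Cd (Le (Tri (Sc (V 0))) (Sc (V 1))) (Sc (V 0)) (V 0))) n = dd n" for n
    by (induction n) (simp_all del: triangle_Suc)
  then show ?thesis by (simp add: Dd_def del: triangle_Suc)
qed
lemma eval_Fs[simp]: "evl \<phi> xs (Fs x) = fst (prod_decode (evl \<phi> xs x))"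
  by (simp add: Fs_def prod_decode_dd del: triangle_Suc)
lemma eval_Sn[simp]: "evl \<phi> xs (Sn x) = snd (prod_decode (evl \<phi> xs x))"
  by (simp add: Sn_def prod_decode_dd del: triangle_Suc)

lemma eval_Bx[simp]: "evl \<phi> xs (Bx m body) = (if \<exists>l<evl \<phi> xs m. evl \<phi> (l # xs) body \<noteq> 0 then 1 else 0)"
proof -
  have "nrec 0 (\<lambda>j r. evl \<phi> (r # j # xs) (Or (V 0) (sh 0 body))) n = (if \<exists>l<n. evl \<phi> (l # xs) body \<noteq> 0 then 1 else 0)" for n
    by (induction n) (auto simp: less_Suc_eq)
  then show ?thesis by (simp only: Bx_def evl.simps(4) evl.simps(2))
qed
lemma eval_Ba[simp]: "evl \<phi> xs (Ba m body) = (if \<forall>l<evl \<phi> xs m. evl \<phi> (l # xs) body \<noteq> 0 then 1 else 0)"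
  by (auto simp add: Ba_def)

lemma wf_derived[simp]:
  "wfe n (Ad a b) = (wfe n a \<and> wfe n b)"
  "wfe n (Pd a) = wfe n a"
  "wfe n (Mn a b) = (wfe n a \<and> wfe n b)"
  "wfe n (Cd c a b) = (wfe n c \<and> wfe n a \<and> wfe n b)"
  "wfe n (Nt a) = wfe n a"
  "wfe n (An a b) = (wfe n a \<and> wfe n b)"
  "wfe n (Or a b) = (wfe n a \<and> wfe n b)"
  "wfe n (Eq a b) = (wfe n a \<and> wfe n b)"
  "wfe n (Le a b) = (wfe n a \<and> wfe n b)"
  "wfe n (Tri a) = wfe n a"
  "wfe n (Pe a b) = (wfe n a \<and> wfe n b)"
  "wfe n (Dd a) = wfe n a"
  "wfe n (Fs a) = wfe n a"
  "wfe n (Sn a) = wfe n a"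
  "wfe n (Bx m body) = (wfe n m \<and> wfe (Suc n) body)"
  "wfe n (Ba m body) = (wfe n m \<and> wfe (Suc n) body)"
  by (auto simp: Ad_def Pd_def Mn_def Cd_def Nt_def An_def Or_def Eq_def Le_def Tri_def Pe_def
     Dd_def Fs_def Sn_def Bx_def Ba_def)




abbreviation fs :: "nat \<Rightarrow> nat" where "fs n \<equiv> fst (prod_decode n)"
abbreviation sn :: "nat \<Rightarrow> nat" where "sn n \<equiv> snd (prod_decode n)"

definition "hdc x = fs (x - 1)"
definition "tlc x = sn (x - 1)"
definition "tls i x = (tlc ^^ i) x"
definition "nthc x i = hdc (tls i x)"
definition "key e xs y = pe e (pe xs y)"

lemma prod_decode_0: "prod_decode 0 = (0, 0)"
  by (simp add: prod_decode_def prod_decode_aux.simps)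

lemma hdc_code[simp]: "hdc (Suc (pe a l)) = a" by (simp add: hdc_def)
lemma tlc_code[simp]: "tlc (Suc (pe a l)) = l" by (simp add: tlc_def)
lemma hdc_0[simp]: "hdc 0 = 0" by (simp add: hdc_def prod_decode_0)
lemma tlc_0[simp]: "tlc 0 = 0" by (simp add: tlc_def prod_decode_0)

lemma code_eq_0[simp]: "list_encode L = 0 \<longleftrightarrow> L = []"
  by (cases L) auto

lemma tlc_code_gen: "tlc (list_encode L) = list_encode (tl L)"
  by (cases L) auto
lemma hdc_code_gen: "hdc (list_encode L) = hd0 L"
  by (cases L) auto

lemma tls_code[simp]: "tls i (list_encode L) = list_encode (drop i L)"
proof (induction i)
  case 0 then show ?case by (simp add: tls_def)
next
  case (Suc i)
  have "tls (Suc i) (list_encode L) = tlc (tls i (list_encode L))" by (simp add: tls_def)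
  also have "\<dots> = list_encode (drop (Suc i) L)" using Suc by (simp add: tlc_code_gen drop_Suc tl_drop)
  finally show ?case .
qed

lemma tls_code_ne[simp]: "tls i (list_encode L) \<noteq> 0 \<longleftrightarrow> i < length L"
  by auto

lemma hd0_drop: "hd0 (drop i L) = (if i < length L then L ! i else 0)"
  by (induction L arbitrary: i) (auto simp: drop_Cons split: nat.splits)

lemma nthc_code[simp]: "nthc (list_encode L) i = (if i < length L then L ! i else 0)"
  by (simp add: nthc_def hdc_code_gen hd0_drop)

lemma length_le_code: "length L \<le> list_encode L"
proof (induction L)
  case (Cons a L)
  have "list_encode L \<le> pe a (list_encode L)" by (rule le_prod_encode_2)
  with Cons show ?case by simp
qed simp

lemma code_cons: "Suc (pe a (list_encode l)) = list_encode (a # l)" by simp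

definition okE :: "nat \<Rightarrow> (nat \<Rightarrow> bool) \<Rightarrow> bool" where
"okE E P \<longleftrightarrow> (let Kk = fs E; aux = sn E; e = fs Kk; xs = fs (sn Kk); y = sn (sn Kk); t = fs e; c = sn e in
 (t = 0 \<and> y = 0) \<or>
 (t = 1 \<and> y = Suc (hdc xs)) \<or>
 (t = 2 \<and> tls c xs \<noteq> 0 \<and> y = nthc xs c) \<or>
 (t = 3 \<and> (\<forall>l<sn c. tls l (sn c) \<noteq> 0 \<longrightarrow> tls l aux \<noteq> 0 \<and> P (key (nthc (sn c) l) xs (nthc aux l)))
        \<and> (\<forall>l<aux. tls l aux \<noteq> 0 \<longrightarrow> tls l (sn c) \<noteq> 0) \<and> P (key (fs c) aux y)) \<or>
 (t = 4 \<and> xs \<noteq> 0 \<and> hdc xs = 0 \<and> P (key (fs c) (tlc xs) y)) \<or>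
 (t = 4 \<and> xs \<noteq> 0 \<and> hdc xs \<noteq> 0 \<and> P (key e (Suc (pe (hdc xs - 1) (tlc xs))) aux)
        \<and> P (key (sn c) (Suc (pe aux (Suc (pe (hdc xs - 1) (tlc xs))))) y)) \<or>
 (t = 5 \<and> P (key (pe 6 (pe c 0)) xs y)) \<or>
 (t = 6 \<and> P (key (fs c) (Suc (pe (sn c) xs)) aux) \<and> aux = 0 \<and> y = sn c) \<or>
 (t = 6 \<and> P (key (fs c) (Suc (pe (sn c) xs)) aux) \<and> aux \<noteq> 0 \<and> P (key (pe 6 (pe (fs c) (Suc (sn c)))) xs y)) \<or>
 (t = 7 \<and> y = 0))"

definition "truek k \<longleftrightarrow> conv noOracle (fs k) (list_decode (fs (sn k))) (sn (sn k))"

lemma truek_key[simp]: "truek (key e xs y) \<longleftrightarrow> conv noOracle e (list_decode xs) y"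
  by (simp add: truek_def key_def)

lemma disjF: "A \<or> B \<Longrightarrow> (A \<Longrightarrow> A') \<Longrightarrow> (B \<Longrightarrow> B') \<Longrightarrow> A' \<or> B'" by blast

lemma okE_mono: assumes "okE E P" and PQ: "\<And>k. P k \<Longrightarrow> Q k" shows "okE E Q"
  using assms(1) unfolding okE_def Let_def
  apply -
  apply (erule disjF, simp, (erule disjF, blast intro: PQ)+)
  apply (blast intro: PQ)
  done

lemma run_Suc_dec: "run A (Suc k) e xs = run A (Suc k) (pe (fs e) (sn e)) xs"
  by simp

lemma okE_sound:
  assumes ok: "okE E P" and P: "\<And>k. P k \<Longrightarrow> truek k"
  shows "truek (fs E)"
proof -
  define Kk where "Kk = fs E"
  define aux where "aux = sn E"
  define e where "e = fs Kk"
  define xs where "xs = fs (sn Kk)"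
  define y where "y = sn (sn Kk)"
  define t where "t = fs e"
  define c where "c = sn e"
  define L where "L = list_decode xs"
  have xsL: "xs = list_encode L" by (simp add: L_def)
  have Kk: "Kk = key e xs y" by (simp add: key_def e_def xs_def y_def)
  have ec: "e = pe t c" by (simp add: t_def c_def)
  have runE: "run noOracle (Suc k) e L = run noOracle (Suc k) (pe t c) L" for k using ec by simp
  have goal: "conv noOracle e L y \<Longrightarrow> truek (fs E)" by (simp add: Kk_def[symmetric] Kk L_def)
  from ok have ok': "(t = 0 \<and> y = 0) \<or>
 (t = 1 \<and> y = Suc (hdc xs)) \<or>
 (t = 2 \<and> tls c xs \<noteq> 0 \<and> y = nthc xs c) \<or>
 (t = 3 \<and> (\<forall>l<sn c. tls l (sn c) \<noteq> 0 \<longrightarrow> tls l aux \<noteq> 0 \<and> P (key (nthc (sn c) l) xs (nthc aux l)))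
        \<and> (\<forall>l<aux. tls l aux \<noteq> 0 \<longrightarrow> tls l (sn c) \<noteq> 0) \<and> P (key (fs c) aux y)) \<or>
 (t = 4 \<and> xs \<noteq> 0 \<and> hdc xs = 0 \<and> P (key (fs c) (tlc xs) y)) \<or>
 (t = 4 \<and> xs \<noteq> 0 \<and> hdc xs \<noteq> 0 \<and> P (key e (Suc (pe (hdc xs - 1) (tlc xs))) aux)
        \<and> P (key (sn c) (Suc (pe aux (Suc (pe (hdc xs - 1) (tlc xs))))) y)) \<or>
 (t = 5 \<and> P (key (pe 6 (pe c 0)) xs y)) \<or>
 (t = 6 \<and> P (key (fs c) (Suc (pe (sn c) xs)) aux) \<and> aux = 0 \<and> y = sn c) \<or>
 (t = 6 \<and> P (key (fs c) (Suc (pe (sn c) xs)) aux) \<and> aux \<noteq> 0 \<and> P (key (pe 6 (pe (fs c) (Suc (sn c)))) xs y)) \<or>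
 (t = 7 \<and> y = 0)"
    unfolding okE_def Let_def Kk_def[symmetric] aux_def[symmetric] e_def[symmetric] xs_def[symmetric]
      y_def[symmetric] t_def[symmetric] c_def[symmetric] .
  have PT: "P (key a b d) \<Longrightarrow> conv noOracle a (list_decode b) d" for a b d
    using P[of "key a b d"] by simp
  show ?thesis
  proof (rule goal)
    show "conv noOracle e L y"
      using ok'
    proof (elim disjE conjE)
      assume c0: "t = 0" "y = 0"
      have "run noOracle (Suc 0) e L = Some y" using c0 runE by (simp add: run_Suc_pe)
      then show ?thesis by (rule conv_mono)
    next
      assume c1: "t = 1" "y = Suc (hdc xs)"
      have "run noOracle (Suc 0) e L = Some y" using c1 runE by (simp add: run_Suc_pe xsL hdc_code_gen)
      then show ?thesis by (rule conv_mono)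
    next
      assume c2: "t = 2" "tls c xs \<noteq> 0" "y = nthc xs c"
      have "run noOracle (Suc 0) e L = Some y" using c2 runE by (simp add: run_Suc_pe xsL)
      then show ?thesis by (rule conv_mono)
    next
      assume c3: "t = 3" "\<forall>l<sn c. tls l (sn c) \<noteq> 0 \<longrightarrow> tls l aux \<noteq> 0 \<and> P (key (nthc (sn c) l) xs (nthc aux l))"
        "\<forall>l<aux. tls l aux \<noteq> 0 \<longrightarrow> tls l (sn c) \<noteq> 0" "P (key (fs c) aux y)"
      define G where "G = list_decode (sn c)"
      define Y where "Y = list_decode aux"
      have G: "sn c = list_encode G" and Y: "aux = list_encode Y" by (simp_all add: G_def Y_def)
      have len: "length Y = length G"
      proof (rule antisym)
        show "length G \<le> length Y"
        proof (rule ccontr)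
          assume "\<not> ?thesis"
          then have "length Y < length G" by simp
          moreover have "length Y < sn c" using calculation length_le_code[of G] G by simp
          ultimately show False using c3(2) G Y by (metis tls_code_ne less_irrefl)
        qed
        show "length Y \<le> length G"
        proof (rule ccontr)
          assume "\<not> ?thesis"
          then have "length G < length Y" by simp
          moreover have "length G < aux" using calculation length_le_code[of Y] Y by simp
          ultimately show False using c3(3) G Y by (metis tls_code_ne less_irrefl)
        qed
      qed
      have each: "list_all2 (\<lambda>g v. conv noOracle g L v) G Y"
      proof (rule list_all2_all_nthI)
        show "length G = length Y" using len by simp
        fix l assume l: "l < length G"
        then have "l < sn c" using length_le_code[of G] G by simp
        then have "P (key (nthc (sn c) l) xs (nthc aux l))" using c3(2) G l by simp
        then show "conv noOracle (G ! l) L (Y ! l)" using l len G Y PT[of "G ! l" xs "Y ! l"]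
          by (simp add: L_def)
      qed
      obtain k1 where k1: "\<forall>k'\<ge>k1. those (map (\<lambda>g. run noOracle k' g L) G) = Some Y"
        using those_common[OF each] by blast
      have "conv noOracle (fs c) Y y" using PT[OF c3(4)] Y by simp
      then obtain k2 where k2: "run noOracle k2 (fs c) Y = Some y" unfolding conv_def by blast
      have "run noOracle (Suc (max k1 k2)) e L = Some y"
        using runE c3(1) k1 run_mono[OF k2, of "max k1 k2"] G by (simp add: run_Suc_pe)
      then show ?thesis by (rule conv_mono)
    next
      assume c4a: "t = 4" "xs \<noteq> 0" "hdc xs = 0" "P (key (fs c) (tlc xs) y)"
      obtain n ys where L: "L = n # ys" using c4a(2) xsL by (cases L) auto
      have "conv noOracle (fs c) ys y" using PT[OF c4a(4)] c4a(3) L xsL by simp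
      then obtain k2 where k2: "run noOracle k2 (fs c) ys = Some y" unfolding conv_def by blast
      have "run noOracle (Suc k2) e L = Some y" using runE c4a k2 L xsL by (simp add: run_Suc_pe)
      then show ?thesis by (rule conv_mono)
    next
      assume c4b: "t = 4" "xs \<noteq> 0" "hdc xs \<noteq> 0" "P (key e (Suc (pe (hdc xs - 1) (tlc xs))) aux)"
        "P (key (sn c) (Suc (pe aux (Suc (pe (hdc xs - 1) (tlc xs))))) y)"
      obtain n ys where L: "L = n # ys" using c4b(2) xsL by (cases L) auto
      have n: "n \<noteq> 0" using c4b(3) L xsL by simp
      have "conv noOracle e ((n - 1) # ys) aux" using PT[OF c4b(4)] L xsL by simp
      then obtain k1 where k1: "run noOracle k1 e ((n - 1) # ys) = Some aux" unfolding conv_def by blast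
      have "conv noOracle (sn c) (aux # (n - 1) # ys) y" using PT[OF c4b(5)] L xsL by simp
      then obtain k2 where k2: "run noOracle k2 (sn c) (aux # (n - 1) # ys) = Some y" unfolding conv_def by blast
      have "run noOracle (Suc (max k1 k2)) e L = Some y"
        using runE c4b(1) n run_mono[OF k1, of "max k1 k2"] run_mono[OF k2, of "max k1 k2"] L ec
        by (simp add: run_Suc_pe)
      then show ?thesis by (rule conv_mono)
    next
      assume c5: "t = 5" "P (key (pe 6 (pe c 0)) xs y)"
      have "conv noOracle (pe 6 (pe c 0)) L y" using PT[OF c5(2)] L_def by simp
      then obtain k2 where k2: "run noOracle k2 (pe 6 (pe c 0)) L = Some y" unfolding conv_def by blast
      have "run noOracle (Suc k2) e L = Some y" using runE c5 k2 by (simp add: run_Suc_pe)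
      then show ?thesis by (rule conv_mono)
    next
      assume c6a: "t = 6" "P (key (fs c) (Suc (pe (sn c) xs)) aux)" "aux = 0" "y = sn c"
      have "conv noOracle (fs c) (sn c # L) aux" using PT[OF c6a(2)] xsL by simp
      then obtain k2 where k2: "run noOracle k2 (fs c) (sn c # L) = Some aux" unfolding conv_def by blast
      have "run noOracle (Suc k2) e L = Some y" using runE c6a k2 by (simp add: run_Suc_pe)
      then show ?thesis by (rule conv_mono)
    next
      assume c6b: "t = 6" "P (key (fs c) (Suc (pe (sn c) xs)) aux)" "aux \<noteq> 0" "P (key (pe 6 (pe (fs c) (Suc (sn c)))) xs y)"
      have "conv noOracle (fs c) (sn c # L) aux" using PT[OF c6b(2)] xsL by simp
      then obtain k1 where k1: "run noOracle k1 (fs c) (sn c # L) = Some aux" unfolding conv_def by blast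
      have "conv noOracle (pe 6 (pe (fs c) (Suc (sn c)))) L y" using PT[OF c6b(4)] L_def by simp
      then obtain k2 where k2: "run noOracle k2 (pe 6 (pe (fs c) (Suc (sn c)))) L = Some y" unfolding conv_def by blast
      have "run noOracle (Suc (max k1 k2)) e L = Some y"
        using runE c6b run_mono[OF k1, of "max k1 k2"] run_mono[OF k2, of "max k1 k2"]
        by (simp add: run_Suc_pe)
      then show ?thesis by (rule conv_mono)
    next
      assume c7: "t = 7" "y = 0"
      have "run noOracle (Suc 0) e L = Some y" using c7 runE by (simp add: run_Suc_pe noOracle_def)
      then show ?thesis by (rule conv_mono)
    qed
  qed
qed


definition "validN C \<longleftrightarrow> (\<forall>m<C. okE (nthc C m) (\<lambda>k. \<exists>l<m. fs (nthc C l) = k))"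
definition "certN C e xs y \<longleftrightarrow> validN C \<and> (\<exists>m<C. fs (nthc C m) = key e xs y)"

lemma validN_sound: "validN C \<Longrightarrow> m < C \<Longrightarrow> truek (fs (nthc C m))"
proof (induction m rule: less_induct)
  case (less m)
  have "okE (nthc C m) (\<lambda>k. \<exists>l<m. fs (nthc C l) = k)" using less.prems validN_def by blast
  then show ?case
    by (rule okE_sound) (use less in auto)
qed

lemma cert_sound: "certN C e xs y \<Longrightarrow> conv noOracle e (list_decode xs) y"
proof -
  assume c: "certN C e xs y"
  then obtain m where m: "m < C" "fs (nthc C m) = key e xs y" unfolding certN_def by blast
  have "truek (fs (nthc C m))" using c m(1) validN_sound unfolding certN_def by blast
  then show ?thesis using m(2) by simp
qed

definition "validL Es \<longleftrightarrow> (\<forall>m<length Es. okE (Es ! m) (\<lambda>k. \<exists>l<m. fs (Es ! l) = k))"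

lemma okE_0: "okE 0 P"
  by (simp add: okE_def prod_decode_0)

lemma validL_cert:
  assumes v: "validL Es" and k: "key e xs y \<in> fs ` set Es"
  shows "certN (list_encode Es) e xs y"
proof -
  have vN: "validN (list_encode Es)"
    unfolding validN_def
  proof (intro allI impI)
    fix m assume "m < list_encode Es"
    show "okE (nthc (list_encode Es) m) (\<lambda>k. \<exists>l<m. fs (nthc (list_encode Es) l) = k)"
    proof (cases "m < length Es")
      case True
      have ok: "okE (Es ! m) (\<lambda>k. \<exists>l<m. fs (Es ! l) = k)" using v[unfolded validL_def, rule_format, OF True] .
      have eq: "nthc (list_encode Es) m = Es ! m" using True by simp
      have imp: "\<exists>l<m. fs (nthc (list_encode Es) l) = k" if "\<exists>l<m. fs (Es ! l) = k" for k
      proof -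
        from that obtain l where l: "l < m" "fs (Es ! l) = k" by blast
        have n: "nthc (list_encode Es) l = Es ! l" using l(1) True by simp
        have h: "fs (nthc (list_encode Es) l) = k" unfolding n by (rule l(2))
        show ?thesis using l(1) h by blast
      qed
      show ?thesis unfolding eq by (rule okE_mono[OF ok imp])
    next
      case False
      then have eq: "nthc (list_encode Es) m = 0" by simp
      show ?thesis unfolding eq by (rule okE_0)
    qed
  qed
  obtain x where x0: "key e xs y = fs x" "x \<in> set Es" using k by (rule imageE)
  have x: "x \<in> set Es" "fs x = key e xs y" using x0 by simp_all
  from x(1) obtain m where m: "m < length Es" "Es ! m = x" unfolding in_set_conv_nth by blast
  have m2: "m < list_encode Es" using m(1) length_le_code[of Es] by simp
  have n: "nthc (list_encode Es) m = x" using m by simp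
  have "fs (nthc (list_encode Es) m) = key e xs y" unfolding n by (rule x(2))
  then have ex: "\<exists>m<list_encode Es. fs (nthc (list_encode Es) m) = key e xs y" using m2 by (intro exI[of _ m] conjI)
  show ?thesis unfolding certN_def using vN ex by (rule conjI)
qed

lemma validL_Nil[simp]: "validL []" by (simp add: validL_def)

lemma ex_shiftA: "(\<exists>l<m. f (A ! l) = k) \<Longrightarrow> m \<le> length A \<Longrightarrow> \<exists>l<m. f ((A @ B) ! l) = k"
proof -
  assume "\<exists>l<m. f (A ! l) = k" "m \<le> length A"
  then obtain l where l: "l < m" "f (A ! l) = k" "l < length A" by auto
  have "(A @ B) ! l = A ! l" using l(3) by (simp add: nth_append)
  then show ?thesis using l by auto
qed
lemma ex_shiftB: "(\<exists>l<m'. f (B ! l) = k) \<Longrightarrow> \<exists>l<length A + m'. f ((A @ B) ! l) = k"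
proof -
  assume "\<exists>l<m'. f (B ! l) = k"
  then obtain l where "l < m'" "f (B ! l) = k" by blast
  then show ?thesis by (intro exI[of _ "length A + l"]) (auto simp: nth_append)
qed
lemma ex_snoc: "k \<in> f ` set A \<Longrightarrow> \<exists>l<length A. f ((A @ [E]) ! l) = k"
proof -
  assume "k \<in> f ` set A"
  then obtain x where x: "k = f x" "x \<in> set A" by (rule imageE)
  then obtain l where l: "l < length A" "A ! l = x" unfolding in_set_conv_nth by blast
  have "(A @ [E]) ! l = A ! l" using l(1) by (simp add: nth_append)
  then show ?thesis using l x by auto
qed

lemma validL_append: "validL A \<Longrightarrow> validL B \<Longrightarrow> validL (A @ B)"
  unfolding validL_def
proof (intro allI impI)
  fix m assume vA: "\<forall>m<length A. okE (A ! m) (\<lambda>k. \<exists>l<m. fs (A ! l) = k)"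
    and vB: "\<forall>m<length B. okE (B ! m) (\<lambda>k. \<exists>l<m. fs (B ! l) = k)"
    and m: "m < length (A @ B)"
  show "okE ((A @ B) ! m) (\<lambda>k. \<exists>l<m. fs ((A @ B) ! l) = k)"
  proof (cases "m < length A")
    case True
    have ok: "okE (A ! m) (\<lambda>k. \<exists>l<m. fs (A ! l) = k)" using vA[rule_format, OF True] .
    have eq: "(A @ B) ! m = A ! m" using True by (simp add: nth_append)
    have le: "m \<le> length A" using True by simp
    show ?thesis unfolding eq by (rule okE_mono[OF ok]) (rule ex_shiftA[OF _ le])
  next
    case False
    define m' where "m' = m - length A"
    have m': "m = length A + m'" "m' < length B" using False m by (auto simp: m'_def)
    have ok: "okE (B ! m') (\<lambda>k. \<exists>l<m'. fs (B ! l) = k)" using vB[rule_format, OF m'(2)] .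
    have eq: "(A @ B) ! (length A + m') = B ! m'" by (simp add: nth_append)
    show ?thesis unfolding m'(1) eq by (rule okE_mono[OF ok]) (rule ex_shiftB)
  qed
qed

lemma validL_snoc:
  assumes "validL A" and "okE E (\<lambda>k. k \<in> fs ` set A)"
  shows "validL (A @ [E])"
  unfolding validL_def
proof (intro allI impI)
  fix m assume m: "m < length (A @ [E])"
  show "okE ((A @ [E]) ! m) (\<lambda>k. \<exists>l<m. fs ((A @ [E]) ! l) = k)"
  proof (cases "m < length A")
    case True
    have ok: "okE (A ! m) (\<lambda>k. \<exists>l<m. fs (A ! l) = k)" using assms(1)[unfolded validL_def, rule_format, OF True] .
    have eq: "(A @ [E]) ! m = A ! m" using True by (simp add: nth_append)
    have le: "m \<le> length A" using True by simp
    show ?thesis unfolding eq by (rule okE_mono[OF ok]) (rule ex_shiftA[OF _ le])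
  next
    case False
    then have mA: "m = length A" using m by simp
    have eq: "(A @ [E]) ! length A = E" by simp
    show ?thesis unfolding mA eq
      by (rule okE_mono[OF assms(2)]) (rule ex_snoc)
  qed
qed

definition keys :: "nat list \<Rightarrow> nat set" where "keys Es = fs ` set Es"

lemma keys_app: "k \<in> keys A \<Longrightarrow> k \<in> keys (A @ B)" "k \<in> keys B \<Longrightarrow> k \<in> keys (A @ B)"
  unfolding keys_def by auto

lemma combine:
  assumes "\<forall>l<(n::nat). \<exists>Es. validL Es \<and> Q l \<in> keys Es"
  shows "\<exists>Es. validL Es \<and> (\<forall>l<n. Q l \<in> keys Es)"
  using assms
proof (induction n)
  case 0 then show ?case by (intro exI[of _ "[]"]) simp
next
  case (Suc n)
  have "\<forall>l<n. \<exists>Es. validL Es \<and> Q l \<in> keys Es" using Suc.prems by simp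
  then obtain A where A: "validL A" "\<forall>l<n. Q l \<in> keys A" using Suc.IH by blast
  obtain B where B: "validL B" "Q n \<in> keys B" using Suc.prems by blast
  have "\<forall>l<Suc n. Q l \<in> keys (A @ B)"
  proof (intro allI impI)
    fix l assume "l < Suc n"
    then consider "l < n" | "l = n" by linarith
    then show "Q l \<in> keys (A @ B)"
    proof cases
      case 1 then show ?thesis using A(2) keys_app(1) by blast
    next
      case 2 then show ?thesis using B(2) keys_app(2) by blast
    qed
  qed
  then show ?case using validL_append[OF A(1) B(1)] by blast
qed

lemma those_nth:
  "those (map f gs) = Some ys \<Longrightarrow> length ys = length gs \<and> (\<forall>l<length gs. f (gs ! l) = Some (ys ! l))"
proof (induction gs arbitrary: ys)
  case Nil then show ?case by simp
next
  case (Cons g gs)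
  then show ?case by (auto split: option.splits simp: nth_Cons split: nat.splits)
qed

lemma key_dec[simp]: "fs (key e xs y) = e" "fs (sn (key e xs y)) = xs" "sn (sn (key e xs y)) = y"
  by (simp_all add: key_def)

lemma ent_dec[simp]: "fs (pe Kx a) = Kx" "sn (pe Kx a) = a" by simp_all


lemma okE_I0:
  assumes "fs e = 0" "y = 0"
  shows "okE (pe (key e xs y) aux) P"
  unfolding okE_def Let_def ent_dec key_dec
  apply (rule disjI1)
  using assms by (intro conjI) assumption+

lemma okE_I1:
  assumes "fs e = 1" "y = Suc (hdc xs)"
  shows "okE (pe (key e xs y) aux) P"
  unfolding okE_def Let_def ent_dec key_dec
  apply (rule disjI2, rule disjI1)
  using assms by (intro conjI) assumption+

lemma okE_I2:
  assumes "fs e = 2" "tls (sn e) xs \<noteq> 0" "y = nthc xs (sn e)"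
  shows "okE (pe (key e xs y) aux) P"
  unfolding okE_def Let_def ent_dec key_dec
  apply (rule disjI2, rule disjI2, rule disjI1)
  using assms by (intro conjI) assumption+

lemma okE_I3:
  assumes "fs e = 3" "\<forall>l<sn (sn e). tls l (sn (sn e)) \<noteq> 0 \<longrightarrow> tls l aux \<noteq> 0 \<and> P (key (nthc (sn (sn e)) l) xs (nthc aux l))" "\<forall>l<aux. tls l aux \<noteq> 0 \<longrightarrow> tls l (sn (sn e)) \<noteq> 0" "P (key (fs (sn e)) aux y)"
  shows "okE (pe (key e xs y) aux) P"
  unfolding okE_def Let_def ent_dec key_dec
  apply (rule disjI2, rule disjI2, rule disjI2, rule disjI1)
  using assms by (intro conjI) assumption+

lemma okE_I4a:
  assumes "fs e = 4" "xs \<noteq> 0" "hdc xs = 0" "P (key (fs (sn e)) (tlc xs) y)"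
  shows "okE (pe (key e xs y) aux) P"
  unfolding okE_def Let_def ent_dec key_dec
  apply (rule disjI2, rule disjI2, rule disjI2, rule disjI2, rule disjI1)
  using assms by (intro conjI) assumption+

lemma okE_I4b:
  assumes "fs e = 4" "xs \<noteq> 0" "hdc xs \<noteq> 0" "P (key e (Suc (pe (hdc xs - 1) (tlc xs))) aux)" "P (key (sn (sn e)) (Suc (pe aux (Suc (pe (hdc xs - 1) (tlc xs))))) y)"
  shows "okE (pe (key e xs y) aux) P"
  unfolding okE_def Let_def ent_dec key_dec
  apply (rule disjI2, rule disjI2, rule disjI2, rule disjI2, rule disjI2, rule disjI1)
  using assms by (intro conjI) assumption+

lemma okE_I5:
  assumes "fs e = 5" "P (key (pe 6 (pe (sn e) 0)) xs y)"
  shows "okE (pe (key e xs y) aux) P"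
  unfolding okE_def Let_def ent_dec key_dec
  apply (rule disjI2, rule disjI2, rule disjI2, rule disjI2, rule disjI2, rule disjI2, rule disjI1)
  using assms by (intro conjI) assumption+

lemma okE_I6a:
  assumes "fs e = 6" "P (key (fs (sn e)) (Suc (pe (sn (sn e)) xs)) aux)" "aux = 0" "y = sn (sn e)"
  shows "okE (pe (key e xs y) aux) P"
  unfolding okE_def Let_def ent_dec key_dec
  apply (rule disjI2, rule disjI2, rule disjI2, rule disjI2, rule disjI2, rule disjI2, rule disjI2, rule disjI1)
  using assms by (intro conjI) assumption+

lemma okE_I6b:
  assumes "fs e = 6" "P (key (fs (sn e)) (Suc (pe (sn (sn e)) xs)) aux)" "aux \<noteq> 0" "P (key (pe 6 (pe (fs (sn e)) (Suc (sn (sn e))))) xs y)"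
  shows "okE (pe (key e xs y) aux) P"
  unfolding okE_def Let_def ent_dec key_dec
  apply (rule disjI2, rule disjI2, rule disjI2, rule disjI2, rule disjI2, rule disjI2, rule disjI2, rule disjI2, rule disjI1)
  using assms by (intro conjI) assumption+

lemma okE_I7:
  assumes "fs e = 7" "y = 0"
  shows "okE (pe (key e xs y) aux) P"
  unfolding okE_def Let_def ent_dec key_dec
  apply (rule disjI2, rule disjI2, rule disjI2, rule disjI2, rule disjI2, rule disjI2, rule disjI2, rule disjI2, rule disjI2)
  using assms by (intro conjI) assumption+


lemma finish:
  assumes "validL A" and "okE (pe (key e xs y) aux) (\<lambda>k. k \<in> keys A)"
  shows "\<exists>Es. validL Es \<and> key e xs y \<in> keys Es"
proof -
  have v: "validL (A @ [pe (key e xs y) aux])" using validL_snoc[OF assms(1)] assms(2) unfolding keys_def by blast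
  have "key e xs y \<in> keys (A @ [pe (key e xs y) aux])" unfolding keys_def by simp
  then show ?thesis using v by blast
qed

lemma complete:
  "run noOracle k e L = Some y \<Longrightarrow> \<exists>Es. validL Es \<and> key e (list_encode L) y \<in> keys Es"
proof (induction k arbitrary: e L y)
  case 0 then show ?case by simp
next
  case (Suc k)
  define t where "t = fs e"
  define c where "c = sn e"
  have e: "e = pe t c" by (simp add: t_def c_def)
  have H: "(if t = 0 then Some 0
     else if t = 1 then Some (Suc (hd0 L))
     else if t = 2 then (if c < length L then Some (L ! c) else None)
     else if t = 3 then
       (case those (map (\<lambda>g. run noOracle k g L) (list_decode (snd (prod_decode c)))) of
          None \<Rightarrow> None
        | Some ys \<Rightarrow> run noOracle k (fst (prod_decode c)) ys)
     else if t = 4 then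
       (case L of
          [] \<Rightarrow> None
        | n # ys \<Rightarrow>
            (if n = 0 then run noOracle k (fst (prod_decode c)) ys
             else (case run noOracle k (pe t c) ((n - 1) # ys) of
                     None \<Rightarrow> None
                   | Some y \<Rightarrow> run noOracle k (snd (prod_decode c)) (y # (n - 1) # ys))))
     else if t = 5 then run noOracle k (prod_encode (6, prod_encode (c, 0))) L
     else if t = 6 then
       (case run noOracle k (fst (prod_decode c)) (snd (prod_decode c) # L) of
          None \<Rightarrow> None
        | Some y \<Rightarrow> (if y = 0 then Some (snd (prod_decode c))
                     else run noOracle k (prod_encode (6, prod_encode (fst (prod_decode c),
                                     Suc (snd (prod_decode c))))) L))
     else if t = 7 then Some (noOracle (hd0 L))
     else None) = Some y"
    using Suc.prems unfolding e run_Suc_pe .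
  have te: "fs e = t" and ce: "sn e = c" by (simp_all add: t_def c_def)
  let ?xs = "list_encode L"
  consider "t = 0" | "t = 1" | "t = 2" | "t = 3" | "t = 4" | "t = 5" | "t = 6" | "t = 7" | "t > 7" by linarith
  then show ?case
  proof cases
    case 1
    then have y: "y = 0" using H by simp
    show ?thesis by (rule finish[OF validL_Nil okE_I0]) (use 1 y te in simp_all)
  next
    case 2
    then have y: "y = Suc (hdc ?xs)" using H by (simp add: hdc_code_gen)
    show ?thesis by (rule finish[OF validL_Nil okE_I1]) (use 2 y te in simp_all)
  next
    case 3
    then have cl: "c < length L" and y: "y = L ! c" using H by (simp_all split: if_splits)
    show ?thesis by (rule finish[OF validL_Nil okE_I2]) (use 3 y te ce cl in simp_all)
  next
    case 4
    define G where "G = list_decode (sn c)"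
    obtain Y where Y: "those (map (\<lambda>g. run noOracle k g L) G) = Some Y"
        and r: "run noOracle k (fs c) Y = Some y"
      using H 4 unfolding G_def by (simp split: option.splits)
    have lenY: "length Y = length G" and each: "\<forall>l<length G. run noOracle k (G ! l) L = Some (Y ! l)"
      using those_nth[OF Y] by simp_all
    have "\<forall>l<length G. \<exists>Es. validL Es \<and> key (G ! l) ?xs (Y ! l) \<in> keys Es"
      using each Suc.IH by blast
    then obtain A1 where A1: "validL A1" "\<forall>l<length G. key (G ! l) ?xs (Y ! l) \<in> keys A1"
      using combine[where Q="\<lambda>l. key (G ! l) ?xs (Y ! l)"] by blast
    obtain A2 where A2: "validL A2" "key (fs c) (list_encode Y) y \<in> keys A2"
      using Suc.IH[OF r] by blast
    have v: "validL (A1 @ A2)" using validL_append[OF A1(1) A2(1)] .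
    have scG: "sn (sn e) = list_encode G" by (simp add: ce G_def)
    show ?thesis
    proof (rule finish[OF v okE_I3[where aux = "list_encode Y"]])
      show "fs e = 3" using te 4 by simp
      show "\<forall>l<sn (sn e). tls l (sn (sn e)) \<noteq> 0 \<longrightarrow> tls l (list_encode Y) \<noteq> 0 \<and>
              key (nthc (sn (sn e)) l) ?xs (nthc (list_encode Y) l) \<in> keys (A1 @ A2)"
      proof (intro allI impI)
        fix l assume "l < sn (sn e)" "tls l (sn (sn e)) \<noteq> 0"
        then have l: "l < length G" unfolding scG by simp
        have "key (G ! l) ?xs (Y ! l) \<in> keys (A1 @ A2)" using A1(2) l keys_app(1) by blast
        then show "tls l (list_encode Y) \<noteq> 0 \<and> key (nthc (sn (sn e)) l) ?xs (nthc (list_encode Y) l) \<in> keys (A1 @ A2)"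
          unfolding scG using l lenY by simp
      qed
      show "\<forall>l<list_encode Y. tls l (list_encode Y) \<noteq> 0 \<longrightarrow> tls l (sn (sn e)) \<noteq> 0"
        unfolding scG using lenY by simp
      show "key (fs (sn e)) (list_encode Y) y \<in> keys (A1 @ A2)"
        using A2(2) keys_app(2) ce by simp
    qed
  next
    case 5
    obtain n ys where L: "L = n # ys" using H 5 by (cases L) auto
    have xs0: "?xs \<noteq> 0" using L by simp
    show ?thesis
    proof (cases "n = 0")
      case True
      then have r: "run noOracle k (fs c) ys = Some y" using H 5 L by simp
      obtain A where A: "validL A" "key (fs c) (list_encode ys) y \<in> keys A" using Suc.IH[OF r] by blast
      show ?thesis
        by (rule finish[OF A(1) okE_I4a]) (use 5 te ce xs0 True L A(2) in simp_all)
    next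
      case False
      obtain z where r1: "run noOracle k (pe t c) ((n - 1) # ys) = Some z"
          and r2: "run noOracle k (sn c) (z # (n - 1) # ys) = Some y"
        using H 5 L False by (simp split: option.splits)
      obtain A1 where A1: "validL A1" "key e (list_encode ((n - 1) # ys)) z \<in> keys A1"
        using Suc.IH[OF r1] e by blast
      obtain A2 where A2: "validL A2" "key (sn c) (list_encode (z # (n - 1) # ys)) y \<in> keys A2"
        using Suc.IH[OF r2] by blast
      have v: "validL (A1 @ A2)" using validL_append[OF A1(1) A2(1)] .
      show ?thesis
      proof (rule finish[OF v okE_I4b[where aux = z]])
        show "fs e = 4" using te 5 by simp
        show "?xs \<noteq> 0" by (rule xs0)
        show "hdc ?xs \<noteq> 0" using L False by simp
        show "key e (Suc (pe (hdc ?xs - 1) (tlc ?xs))) z \<in> keys (A1 @ A2)"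
          using keys_app(1)[OF A1(2)] L by simp
        show "key (sn (sn e)) (Suc (pe z (Suc (pe (hdc ?xs - 1) (tlc ?xs))))) y \<in> keys (A1 @ A2)"
          using keys_app(2)[OF A2(2)] L ce by simp
      qed
    qed
  next
    case 6
    then have r: "run noOracle k (pe 6 (pe c 0)) L = Some y" using H by simp
    obtain A where A: "validL A" "key (pe 6 (pe c 0)) ?xs y \<in> keys A" using Suc.IH[OF r] by blast
    show ?thesis by (rule finish[OF A(1) okE_I5]) (use 6 te ce A(2) in simp_all)
  next
    case 7
    obtain z where r1: "run noOracle k (fs c) (sn c # L) = Some z"
      using H 7 by (simp split: option.splits)
    obtain A1 where A1: "validL A1" "key (fs c) (list_encode (sn c # L)) z \<in> keys A1"
      using Suc.IH[OF r1] by blast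
    show ?thesis
    proof (cases "z = 0")
      case True
      then have y: "y = sn c" using H 7 r1 by simp
      show ?thesis by (rule finish[OF A1(1) okE_I6a[where aux = z]]) (use 7 te ce A1(2) True y in simp_all)
    next
      case False
      then have r2: "run noOracle k (pe 6 (pe (fs c) (Suc (sn c)))) L = Some y" using H 7 r1 by simp
      obtain A2 where A2: "validL A2" "key (pe 6 (pe (fs c) (Suc (sn c)))) ?xs y \<in> keys A2"
        using Suc.IH[OF r2] by blast
      have v: "validL (A1 @ A2)" using validL_append[OF A1(1) A2(1)] .
      show ?thesis
      proof (rule finish[OF v okE_I6b[where aux = z]])
        show "fs e = 6" using te 7 by simp
        show "key (fs (sn e)) (Suc (pe (sn (sn e)) ?xs)) z \<in> keys (A1 @ A2)"
          using keys_app(1)[OF A1(2)] ce by simp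
        show "z \<noteq> 0" by (rule False)
        show "key (pe 6 (pe (fs (sn e)) (Suc (sn (sn e))))) ?xs y \<in> keys (A1 @ A2)"
          using keys_app(2)[OF A2(2)] ce by simp
      qed
    qed
  next
    case 8
    then have y: "y = 0" using H by (simp add: noOracle_def)
    show ?thesis by (rule finish[OF validL_Nil okE_I7]) (use 8 y te in simp_all)
  next
    case 9
    then show ?thesis using H by simp
  qed
qed




definition "Lt a body = Rc (K 1) a (sh 1 body)"

lemma eval_Lt[simp]: "evl \<phi> xs (Lt a body) = evl \<phi> (evl \<phi> xs a # xs) body"
proof -
  have "evl \<phi> (r # 0 # xs) (sh 1 body) = evl \<phi> (r # xs) body" for r
    using eval_sh[of 1 "r # xs" \<phi> 0 body] by simp
  then show ?thesis by (simp add: Lt_def)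
qed

lemma wf_Lt[simp]: "wfe n a \<Longrightarrow> wfe n (Lt a body) = wfe (Suc n) body"
  by (simp add: Lt_def)

abbreviation "s0 \<equiv> sh 0"

definition "hdcE x = Fs (Pd x)"
definition "tlcE x = Sn (Pd x)"
definition "tlsE i x = Rc i x (tlcE (V 0))"
definition "nthcE x i = hdcE (tlsE i x)"
definition "keyE e xs y = Pe e (Pe xs y)"
definition "earE C m k = Bx m (Eq (Fs (nthcE (s0 C) (V 0))) (s0 k))"

lemma eval_hdcE[simp]: "evl \<phi> xs (hdcE x) = hdc (evl \<phi> xs x)" by (simp add: hdcE_def hdc_def)
lemma eval_tlcE[simp]: "evl \<phi> xs (tlcE x) = tlc (evl \<phi> xs x)" by (simp add: tlcE_def tlc_def)
lemma eval_tlsE[simp]: "evl \<phi> xs (tlsE i x) = tls (evl \<phi> xs i) (evl \<phi> xs x)"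
proof -
  have "nrec (evl \<phi> xs x) (\<lambda>j r. evl \<phi> (r # j # xs) (tlcE (V 0))) n = tls n (evl \<phi> xs x)" for n
    by (induction n) (simp_all add: tls_def)
  then show ?thesis by (simp add: tlsE_def)
qed
lemma eval_nthcE[simp]: "evl \<phi> xs (nthcE x i) = nthc (evl \<phi> xs x) (evl \<phi> xs i)"
  by (simp add: nthcE_def nthc_def)
lemma eval_keyE[simp]: "evl \<phi> xs (keyE e ys y) = key (evl \<phi> xs e) (evl \<phi> xs ys) (evl \<phi> xs y)"
  by (simp add: keyE_def key_def)
lemma eval_earE[simp]: "evl \<phi> xs (earE C m k) =
   (if \<exists>l<evl \<phi> xs m. fs (nthc (evl \<phi> xs C) l) = evl \<phi> xs k then 1 else 0)"
  by (simp add: earE_def)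

lemma wf_E[simp]:
  "wfe n (hdcE x) = wfe n x" "wfe n (tlcE x) = wfe n x" "wfe n (tlsE i x) = (wfe n i \<and> wfe n x)"
  "wfe n (nthcE x i) = (wfe n x \<and> wfe n i)" "wfe n (keyE e ys y) = (wfe n e \<and> wfe n ys \<and> wfe n y)"
  "wfe n (earE C m k) = (wfe n C \<and> wfe n m \<and> wfe n k)"
  by (auto simp: hdcE_def tlcE_def tlsE_def nthcE_def keyE_def earE_def)


definition okEx :: "ex \<Rightarrow> ex \<Rightarrow> ex \<Rightarrow> ex" where
"okEx E C m = (let Kk = Fs E; aux = Sn E; e = Fs Kk; xs = Fs (Sn Kk); y = Sn (Sn Kk); t = Fs e; c = Sn e;
   ear = earE C m; c' = s0 c; aux' = s0 aux; xs' = s0 xs in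
 Or (An (Eq t (K 0)) (Eq y (K 0)))
 (Or (An (Eq t (K 1)) (Eq y (Sc (hdcE xs))))
 (Or (An (Eq t (K 2)) (An (Nt (Eq (tlsE c xs) (K 0))) (Eq y (nthcE xs c))))
 (Or (An (Eq t (K 3)) (An (Ba (Sn c)
        (Or (Eq (tlsE (V 0) (Sn c')) (K 0))
            (An (Nt (Eq (tlsE (V 0) aux') (K 0)))
                (earE (s0 C) (s0 m) (keyE (nthcE (Sn c') (V 0)) xs' (nthcE aux' (V 0)))))))
     (An (Ba aux (Or (Eq (tlsE (V 0) aux') (K 0)) (Nt (Eq (tlsE (V 0) (Sn c')) (K 0)))))
         (ear (keyE (Fs c) aux y)))))
 (Or (An (Eq t (K 4)) (An (Nt (Eq xs (K 0))) (An (Eq (hdcE xs) (K 0)) (ear (keyE (Fs c) (tlcE xs) y)))))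
 (Or (An (Eq t (K 4)) (An (Nt (Eq xs (K 0))) (An (Nt (Eq (hdcE xs) (K 0)))
        (An (ear (keyE e (Sc (Pe (Pd (hdcE xs)) (tlcE xs))) aux))
            (ear (keyE (Sn c) (Sc (Pe aux (Sc (Pe (Pd (hdcE xs)) (tlcE xs))))) y))))))
 (Or (An (Eq t (K 5)) (ear (keyE (Pe (K 6) (Pe c (K 0))) xs y)))
 (Or (An (Eq t (K 6)) (An (ear (keyE (Fs c) (Sc (Pe (Sn c) xs)) aux)) (An (Eq aux (K 0)) (Eq y (Sn c)))))
 (Or (An (Eq t (K 6)) (An (ear (keyE (Fs c) (Sc (Pe (Sn c) xs)) aux)) (An (Nt (Eq aux (K 0)))
        (ear (keyE (Pe (K 6) (Pe (Fs c) (Sc (Sn c)))) xs y)))))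
     (An (Eq t (K 7)) (Eq y (K 0))))))))))))"

lemma eval_okEx[simp]: "evl \<phi> env (okEx E C m) =
  (if okE (evl \<phi> env E) (\<lambda>k. \<exists>l<evl \<phi> env m. fs (nthc (evl \<phi> env C) l) = k) then 1 else 0)"
  unfolding okEx_def okE_def Let_def by simp

lemma wf_okEx[simp]: "wfe n E \<Longrightarrow> wfe n C \<Longrightarrow> wfe n m \<Longrightarrow> wfe n (okEx E C m)"
  unfolding okEx_def Let_def by simp


definition "validEx C = Ba C (okEx (nthcE (s0 C) (V 0)) (s0 C) (V 0))"
definition "certEx C e xs y = An (validEx C) (Bx C (Eq (Fs (nthcE (s0 C) (V 0))) (s0 (keyE e xs y))))"

lemma eval_validEx[simp]: "evl \<phi> env (validEx C) = (if validN (evl \<phi> env C) then 1 else 0)"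
  by (simp add: validEx_def validN_def)

lemma eval_certEx[simp]: "evl \<phi> env (certEx C e xs y) =
   (if certN (evl \<phi> env C) (evl \<phi> env e) (evl \<phi> env xs) (evl \<phi> env y) then 1 else 0)"
  by (simp add: certEx_def certN_def)

lemma wf_certEx[simp]: "wfe n C \<Longrightarrow> wfe n e \<Longrightarrow> wfe n xs \<Longrightarrow> wfe n y \<Longrightarrow> wfe n (certEx C e xs y)"
  by (simp add: certEx_def validEx_def)

definition "cstE i = Rc i (K zp) (Pe (K 3) (Pe (K sp) (Sc (Pe (V 0) (K 0)))))"

lemma eval_cstE[simp]: "evl \<phi> env (cstE i) = cst (evl \<phi> env i)"
proof -
  have "nrec zp (\<lambda>j r. evl \<phi> (r # j # env) (Pe (K 3) (Pe (K sp) (Sc (Pe (V 0) (K 0)))))) n = cst n" for n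
    by (induction n) (simp_all add: cmp_def)
  then show ?thesis by (simp add: cstE_def)
qed

lemma wf_cstE[simp]: "wfe n (cstE i) = wfe n i" by (simp add: cstE_def)

definition "gE = Pe (K 3) (Pe (V 1) (Sc (Pe (cstE (V 2)) (Sc (Pe (K (pj 0)) (K 0))))))"
definition "pcE = Rc (Fs (V 0)) (K 0) (Sc (Pe (Ph (lift2 gE) (Mn (Mn (lift2 (Fs (V 0))) (V 1)) (K 1))) (V 0)))"
definition "CheckE = Nt (certEx (Sn (V 0)) (V 1) (Sc (Pe (V 2) (Sc (Pe pcE (K 0))))) (K 0))"

definition "Gc e i = cmp e [cst i, pj 0]"

lemma eval_gE[simp]: "evl \<phi> [w, e, i] gE = Gc e i"
  by (simp add: gE_def Gc_def cmp_def)

lemma nrec_pc: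
  "m \<le> j \<Longrightarrow> nrec 0 (\<lambda>m r. Suc (pe (f (j - Suc m)) r)) m = list_encode (map f [j - m..<j])"
proof (induction m)
  case 0 then show ?case by simp
next
  case (Suc m)
  have "[j - Suc m..<j] = (j - Suc m) # [j - m..<j]"
    using Suc.prems by (simp add: upt_conv_Cons Suc_diff_Suc)
  then show ?case using Suc by simp
qed

lemma eval_pcE[simp]: "evl \<phi> [w, e, i] pcE = list_encode (map (\<phi> (Gc e i)) [0..<fs w])"
proof -
  have "nrec 0 (\<lambda>j r. evl \<phi> (r # j # [w, e, i]) (Sc (Pe (Ph (lift2 gE) (Mn (Mn (lift2 (Fs (V 0))) (V 1)) (K 1))) (V 0)))) (fs w)
       = nrec 0 (\<lambda>m r. Suc (pe (\<phi> (Gc e i) (fs w - Suc m)) r)) (fs w)"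
    by simp
  also have "\<dots> = list_encode (map (\<phi> (Gc e i)) [0..<fs w])" using nrec_pc[of "fs w" "fs w"] by simp
  finally show ?thesis by (simp add: pcE_def)
qed

lemma eval_CheckE: "evl \<phi> [w, e, i] CheckE =
   (if certN (sn w) e (list_encode [i, list_encode (map (\<phi> (Gc e i)) [0..<fs w])]) 0 then 0 else 1)"
  by (simp add: CheckE_def)

lemma wf_CheckE: "wfe 3 CheckE"
  by (simp add: CheckE_def pcE_def gE_def numeral_eq_Suc)




lemma cert_iff: "conv noOracle e L y \<longleftrightarrow> (\<exists>C. certN C e (list_encode L) y)"
proof
  assume "conv noOracle e L y"
  then obtain k where "run noOracle k e L = Some y" unfolding conv_def by blast
  then obtain Es where "validL Es" "key e (list_encode L) y \<in> keys Es" using complete by blast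
  then have "certN (list_encode Es) e (list_encode L) y" using validL_cert unfolding keys_def by blast
  then show "\<exists>C. certN C e (list_encode L) y" by blast
next
  assume "\<exists>C. certN C e (list_encode L) y"
  then obtain C where "certN C e (list_encode L) y" by blast
  from cert_sound[OF this] show "conv noOracle e L y" by simp
qed

lemma take_map_upt: "j \<le> n \<Longrightarrow> take j (map f [0..<n]) = map f [0..<j]"
  by (simp add: take_map)

lemma Tr_path: "isPath (Tr g) f \<longleftrightarrow> (\<forall>j. \<not> conv noOracle g [list_encode (map f [0..<j])] 0)"
proof
  assume P: "isPath (Tr g) f"
  show "\<forall>j. \<not> conv noOracle g [list_encode (map f [0..<j])] 0"
  proof (intro allI notI)
    fix j assume "conv noOracle g [list_encode (map f [0..<j])] 0"
    then obtain k where k: "run noOracle k g [list_encode (map f [0..<j])] = Some 0" unfolding conv_def by blast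
    let ?n = "max j k"
    have "map f [0..<?n] \<in> Tr g" using P unfolding isPath_def by blast
    then have "run noOracle (length (map f [0..<?n])) g [list_encode (take j (map f [0..<?n]))] \<noteq> Some 0"
      unfolding Tr_def by simp
    moreover have "take j (map f [0..<?n]) = map f [0..<j]" by (simp add: take_map_upt)
    moreover have "run noOracle ?n g [list_encode (map f [0..<j])] = Some 0" using run_mono[OF k] by simp
    ultimately show False by simp
  qed
next
  assume N: "\<forall>j. \<not> conv noOracle g [list_encode (map f [0..<j])] 0"
  show "isPath (Tr g) f" unfolding isPath_def Tr_def
  proof (intro allI CollectI impI)
    fix n j assume j: "j \<le> length (map f [0..<n])"
    show "run noOracle (length (map f [0..<n])) g [list_encode (take j (map f [0..<n]))] \<noteq> Some 0"
    proof
      assume "run noOracle (length (map f [0..<n])) g [list_encode (take j (map f [0..<n]))] = Some 0"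
      moreover have "take j (map f [0..<n]) = map f [0..<j]" using j by (simp add: take_map_upt)
      ultimately have "conv noOracle g [list_encode (map f [0..<j])] 0" unfolding conv_def by auto
      then show False using N by blast
    qed
  qed
qed

lemma TrP_path: "isPath (TrP e i) f \<longleftrightarrow> (\<forall>j. \<not> conv noOracle e [i, list_encode (map f [0..<j])] 0)"
proof
  assume P: "isPath (TrP e i) f"
  show "\<forall>j. \<not> conv noOracle e [i, list_encode (map f [0..<j])] 0"
  proof (intro allI notI)
    fix j assume "conv noOracle e [i, list_encode (map f [0..<j])] 0"
    then obtain k where k: "run noOracle k e [i, list_encode (map f [0..<j])] = Some 0" unfolding conv_def by blast
    let ?n = "max j k"
    have "map f [0..<?n] \<in> TrP e i" using P unfolding isPath_def by blast
    then have "run noOracle (length (map f [0..<?n])) e [i, list_encode (take j (map f [0..<?n]))] \<noteq> Some 0"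
      unfolding TrP_def by simp
    moreover have "take j (map f [0..<?n]) = map f [0..<j]" by (simp add: take_map_upt)
    moreover have "run noOracle ?n e [i, list_encode (map f [0..<j])] = Some 0" using run_mono[OF k] by simp
    ultimately show False by simp
  qed
next
  assume N: "\<forall>j. \<not> conv noOracle e [i, list_encode (map f [0..<j])] 0"
  show "isPath (TrP e i) f" unfolding isPath_def TrP_def
  proof (intro allI CollectI impI)
    fix n j assume j: "j \<le> length (map f [0..<n])"
    show "run noOracle (length (map f [0..<n])) e [i, list_encode (take j (map f [0..<n]))] \<noteq> Some 0"
    proof
      assume "run noOracle (length (map f [0..<n])) e [i, list_encode (take j (map f [0..<n]))] = Some 0"
      moreover have "take j (map f [0..<n]) = map f [0..<j]" using j by (simp add: take_map_upt)
      ultimately have "conv noOracle e [i, list_encode (map f [0..<j])] 0" unfolding conv_def by auto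
      then show False using N by blast
    qed
  qed
qed

lemma conv_cmp_intro:
  assumes "conv A f ys y" and "list_all2 (\<lambda>g v. conv A g xs v) gs ys"
  shows "conv A (cmp f gs) xs y"
proof -
  obtain k1 where k1: "\<forall>k'\<ge>k1. those (map (\<lambda>g. run A k' g xs) gs) = Some ys"
    using those_common[OF assms(2)] by blast
  obtain k2 where k2: "run A k2 f ys = Some y" using assms(1) unfolding conv_def by blast
  have "run A (Suc (max k1 k2)) (cmp f gs) xs = Some y" using k1 run_mono[OF k2] by simp
  then show ?thesis by (rule conv_mono)
qed

lemma args_conv: "list_all2 (\<lambda>g v. conv A g [x] v) [cst i, pj 0] [i, x]"
proof -
  have "conv A (cst i) [x] i" using computes_cst[of A i 1] unfolding computes_def by simp
  moreover have "conv A (pj 0) [x] x"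
  proof -
    have "\<forall>xs. length xs = 1 \<longrightarrow> conv A (pj 0) xs (xs ! 0)" using computes_pj[of 0 1 A] unfolding computes_def by simp
    then have "conv A (pj 0) [x] ([x] ! 0)" by (metis length_Cons list.size(3) One_nat_def)
    then show ?thesis by simp
  qed
  ultimately show ?thesis by simp
qed

lemma G_conv: "conv noOracle (Gc e i) [x] 0 \<longleftrightarrow> conv noOracle e [i, x] 0"
  unfolding Gc_def using conv_cmp_inv[OF _ args_conv] conv_cmp_intro[OF _ args_conv] by blast

lemma Tr_Gc_path: "isPath (Tr (Gc e i)) f \<longleftrightarrow> isPath (TrP e i) f"
  unfolding Tr_path TrP_path G_conv ..

lemma illF_Gc: "illFounded (Tr (Gc e i)) \<longleftrightarrow> illFounded (TrP e i)"
  unfolding illFounded_def Tr_Gc_path ..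


definition "qE C0 = Pe (K 3) (Pe (K C0) (Sc (Pe (cstE (V 0)) (Sc (Pe (K (pj 0)) (K 0))))))"

lemma q_exists: "\<exists>q. \<forall>e. conv noOracle q [e] (cmp C0 [cst e, pj 0])"
proof -
  have P: "\<And>a b. conv noOracle zp [a, b] ((\<lambda>_ _. 0) a b)" using computes_zp unfolding computes_def by simp
  have wfq: "wfe 1 (qE C0)" by (simp add: qE_def)
  have c: "computes noOracle (compile zp 1 (qE C0)) 1 (\<lambda>xs. evl (\<lambda>_ _. 0) xs (qE C0))"
    by (rule compile_correct[OF P wfq])
  have "conv noOracle (compile zp 1 (qE C0)) [e] (cmp C0 [cst e, pj 0])" for e
  proof -
    have "conv noOracle (compile zp 1 (qE C0)) [e] (evl (\<lambda>_ _. 0) [e] (qE C0))"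
      using c unfolding computes_def by simp
    moreover have "evl (\<lambda>_ _. 0) [e] (qE C0) = cmp C0 [cst e, pj 0]" by (simp add: qE_def cmp_def)
    ultimately show ?thesis by simp
  qed
  then show ?thesis by blast
qed

lemma list3: "length xs = 3 \<Longrightarrow> \<exists>a b c. xs = [a, b, c]"
  by (metis (no_types) length_0_conv length_Suc_conv numeral_3_eq_3)

theorem mainTheorem4:
  fixes D :: "nat set"
  assumes "loqHighPaths D"
  shows "\<exists>q. \<forall>e. \<exists>c. conv noOracle q [e] c \<and> W D c = Pi11 e"
proof -
  obtain \<Phi> p where hP: "\<forall>e n. conv (chi D) \<Phi> [e, n] (p e n)"
      and hp: "\<forall>e. illFounded (Tr e) \<longrightarrow> isPath (Tr e) (p e)"
    using assms unfolding loqHighPaths_def by blast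
  define Chk where "Chk = compile \<Phi> 3 CheckE"
  define C0 where "C0 = mup Chk"
  have cChk: "computes (chi D) Chk 3 (\<lambda>xs. evl p xs CheckE)"
    unfolding Chk_def by (rule compile_correct[OF _ wf_CheckE]) (use hP in blast)
  have cChk': "computes (chi D) Chk (Suc 2) (\<lambda>xs. evl p xs CheckE)" using cChk by simp
  obtain q where q: "\<forall>e. conv noOracle q [e] (cmp C0 [cst e, pj 0])" using q_exists by blast
  have "W D (cmp C0 [cst e, pj 0]) = Pi11 e" for e
  proof (intro set_eqI iffI)
    fix i
    let ?G = "Gc e i"
    assume "i \<in> W D (cmp C0 [cst e, pj 0])"
    then obtain y where y: "conv (chi D) (cmp C0 [cst e, pj 0]) [i] y" unfolding W_def by blast
    have "conv (chi D) C0 [e, i] y" by (rule conv_cmp_inv[OF y args_conv])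
    then have "evl p [y, e, i] CheckE = 0" unfolding C0_def using mup_inv[OF cChk'] by simp
    then have cert: "certN (sn y) e (list_encode [i, list_encode (map (p ?G) [0..<fs y])]) 0"
      unfolding eval_CheckE by (simp split: if_splits)
    have "conv noOracle e [i, list_encode (map (p ?G) [0..<fs y])] 0"
      using cert_sound[OF cert] by simp
    then have "\<not> isPath (TrP e i) (p ?G)" unfolding TrP_path by blast
    then have "\<not> isPath (Tr ?G) (p ?G)" unfolding Tr_Gc_path .
    then have "\<not> illFounded (Tr ?G)" using hp by blast
    then show "i \<in> Pi11 e" unfolding Pi11_def illF_Gc by simp
  next
    fix i
    let ?G = "Gc e i"
    assume "i \<in> Pi11 e"
    then have "\<not> illFounded (Tr ?G)" unfolding Pi11_def illF_Gc by simp
    then have "\<not> isPath (Tr ?G) (p ?G)" unfolding illFounded_def by blast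
    then obtain j where j: "conv noOracle ?G [list_encode (map (p ?G) [0..<j])] 0"
      unfolding Tr_path by blast
    then have "conv noOracle e [i, list_encode (map (p ?G) [0..<j])] 0" unfolding G_conv .
    then obtain C where C: "certN C e (list_encode [i, list_encode (map (p ?G) [0..<j])]) 0"
      unfolding cert_iff by blast
    have "evl p [pe j C, e, i] CheckE = 0" unfolding eval_CheckE using C by simp
    then obtain y where "conv (chi D) C0 [e, i] y" unfolding C0_def using mup_conv[OF cChk'] by fastforce
    then have "conv (chi D) (cmp C0 [cst e, pj 0]) [i] y" by (rule conv_cmp_intro[OF _ args_conv])
    then show "i \<in> W D (cmp C0 [cst e, pj 0])" unfolding W_def by blast
  qed
  then show ?thesis using q by blast
qed


end
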